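(* Let $p$ be a prime, $G=\mathbb{Z}_p$, and let $f,g$ be flows on $n$. Suppose there is a set of indices $I\subseteq[n]$ with $|I|=p-1$ such that $f(i)\neq g(i)$ for every $i\in I$. Then for any subset $I'\subseteq[n]$ disjoint from $I$ there exists a subset $I''\subseteq I$ such that $f$ and $g$ can be exchanged on $I'\cup I''$, i.e. $\sum_{i\in I'\cup I''}f(i)=\sum_{i\in I'\cup I''}g(i)$ in $\mathbb{Z}_p$.
   Context: For a finite abelian group $G$ and $n\in\mathbb{N}$, a flow on $n$ is a function $f:[n]\to G$, $[n]=\{1,\dots,n\}$, with $\sum_{i=1}^n f(i)=0$. Exchanging two flows $f,g$ on a set of indices $J$ means replacing them by $f',g'$ with $f'(i)=f(i)$, $g'(i)=g(i)$ for $i\notin J$ and $f'(i)=g(i)$, $g'(i)=f(i)$ for $i\in J$; this yields flows exactly when $\sum_{i\in J}f(i)=\sum_{i\in J}g(i)$. $\mathbb{Z}_p$ is the cyclic group of order $p$. *)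

theory Defs
  imports "HOL-Number_Theory.Number_Theory"
begin

text \<open>Elements of Z_p are represented by integers modulo p; equality in Z_p is
  congruence modulo p. A flow on n is a function on [n] = {1..n} summing to 0 in Z_p.\<close>

definition zp_flow :: "nat \<Rightarrow> nat \<Rightarrow> (nat \<Rightarrow> int) \<Rightarrow> bool" where
  "zp_flow p n f \<longleftrightarrow> [(\<Sum>i\<in>{1..n}. f i) = 0] (mod int p)"

end

theory Submission
  imports Defs
begin

lemma closed_all:
  fixes S :: "int set" and q a :: int
  assumes "0 \<in> S" "\<forall>x\<in>S. (x + a) mod q \<in> S" "coprime a q" "q > 0"
  shows "{0..<q} \<subseteq> S"
proof
  fix t assume t: "t \<in> {0..<q}"
  have k: "(int k * a) mod q \<in> S" for k :: nat
  proof (induction k)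
    case 0 then show ?case using assms(1) by simp
  next
    case (Suc k)
    have "(int (Suc k) * a) mod q = ((int k * a) mod q + a) mod q"
      by (simp add: algebra_simps mod_add_right_eq)
    then show ?case using Suc assms(2) by metis
  qed
  obtain b where b: "[a * b = 1] (mod q)" using cong_solve_coprime_int[OF assms(3)] by blast
  define k where "k = nat ((t*b) mod q)"
  have "int k = (t*b) mod q" unfolding k_def using assms(4) by simp
  hence "[int k * a = t * b * a] (mod q)"
    by (simp add: cong_def mod_mult_left_eq)
  moreover have "[t * b * a = t * 1] (mod q)"
    using b by (metis cong_scalar_left mult.assoc mult.commute)
  ultimately have "[int k * a = t] (mod q)" by (metis cong_trans mult_1_right)
  hence "(int k * a) mod q = t" using t by (simp add: cong_def)
  thus "t \<in> S" using k by metis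
qed

definition ss :: "int \<Rightarrow> (nat \<Rightarrow> int) \<Rightarrow> nat set \<Rightarrow> int set" where
  "ss q d J = (\<lambda>K. (\<Sum>i\<in>K. d i) mod q) ` Pow J"

lemma ss_sub: "q > 0 \<Longrightarrow> ss q d J \<subseteq> {0..<q}"
  unfolding ss_def by auto

lemma ss_card:
  fixes q :: int
  assumes "finite J" "\<forall>i\<in>J. coprime (d i) q" "q > 0"
  shows "card (ss q d J) \<ge> min (nat q) (card J + 1)"
  using assms
proof (induction J rule: finite_induct)
  case empty
  have "ss q d {} = {0}" unfolding ss_def by simp
  then show ?case by simp
next
  case (insert a J)
  let ?S = "ss q d J"
  let ?sh = "\<lambda>x. (x + d a) mod q"
  have fin: "finite ?S" using ss_sub[OF insert.prems(2)] finite_subset by blast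
  have IH: "card ?S \<ge> min (nat q) (card J + 1)" using insert by simp
  have eq: "ss q d (insert a J) = ?S \<union> ?sh ` ?S"
  proof -
    have "(\<lambda>K. (\<Sum>i\<in>K. d i) mod q) ` insert a ` Pow J = ?sh ` ?S"
      unfolding ss_def image_image
    proof (rule image_cong[OF refl])
      fix K assume "K \<in> Pow J"
      hence "a \<notin> K" "finite K" using insert(2) insert(1) finite_subset by auto
      thus "(\<Sum>i\<in>insert a K. d i) mod q = ((\<Sum>i\<in>K. d i) mod q + d a) mod q"
        by (simp add: mod_add_right_eq add.commute)
    qed
    thus ?thesis unfolding ss_def Pow_insert image_Un by simp
  qed
  show ?case
  proof (cases "?sh ` ?S \<subseteq> ?S")
    case True
    have "0 \<in> ?S" unfolding ss_def by (rule image_eqI[of _ _ "{}"]) auto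
    hence "{0..<q} \<subseteq> ?S"
      using closed_all[of ?S "d a" q] True insert.prems by auto
    hence "?S = {0..<q}" using ss_sub[OF insert.prems(2)] by auto
    hence "card (ss q d (insert a J)) = nat q" using eq True
      by (metis card_atLeastLessThan_int diff_zero sup.absorb1)
    then show ?thesis by simp
  next
    case False
    then obtain y where y: "y \<in> ?sh ` ?S" "y \<notin> ?S" by blast
    have "insert y ?S \<subseteq> ss q d (insert a J)" using eq y by auto
    moreover have "finite (ss q d (insert a J))" using eq fin by simp
    ultimately have "card (insert y ?S) \<le> card (ss q d (insert a J))" by (simp add: card_mono)
    hence "card ?S + 1 \<le> card (ss q d (insert a J))" using y fin by simp
    then show ?thesis using IH insert(1,2) by simp
  qed
qed

theorem lemma3p1:
  fixes p n :: nat and f g :: "nat \<Rightarrow> int" and I I' :: "nat set"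
  assumes "prime p"
    and "zp_flow p n f" and "zp_flow p n g"
    and "I \<subseteq> {1..n}" and "card I = p - 1"
    and "\<forall>i\<in>I. \<not> [f i = g i] (mod int p)"
    and "I' \<subseteq> {1..n}" and "I \<inter> I' = {}"
  shows "\<exists>I''. I'' \<subseteq> I \<and>
           [(\<Sum>i\<in>I' \<union> I''. f i) = (\<Sum>i\<in>I' \<union> I''. g i)] (mod int p)"
proof -
  define q where "q = int p"
  define d where "d i = f i - g i" for i
  have q0: "q > 0" and pq: "prime q" using assms(1) prime_gt_0_nat unfolding q_def by auto
  have finI: "finite I" and finI': "finite I'" using assms(4,7) finite_subset by auto
  have cop: "\<forall>i\<in>I. coprime (d i) q"
  proof
    fix i assume "i \<in> I"
    hence "\<not> q dvd d i" using assms(6) unfolding d_def q_def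
      by (simp add: cong_iff_dvd_diff)
    thus "coprime (d i) q" using prime_imp_coprime[OF pq] coprime_commute by blast
  qed
  have "card (ss q d I) \<ge> min (nat q) (card I + 1)" using ss_card[OF finI cop q0] .
  moreover have "card I + 1 = nat q" using assms(5) assms(1) prime_gt_0_nat unfolding q_def by simp
  ultimately have "card (ss q d I) \<ge> card {0..<q}" by simp
  hence "ss q d I = {0..<q}" using ss_sub[OF q0]
    by (metis card_seteq finite_atLeastLessThan_int)
  moreover have "(- (\<Sum>i\<in>I'. d i)) mod q \<in> {0..<q}" using q0 by simp
  ultimately obtain K where K: "K \<subseteq> I" "(\<Sum>i\<in>K. d i) mod q = (- (\<Sum>i\<in>I'. d i)) mod q"
    unfolding ss_def by (metis (no_types, lifting) PowD imageE)
  have finK: "finite K" using K(1) finI finite_subset by auto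
  have disj: "I' \<inter> K = {}" using K(1) assms(8) by auto
  have "(\<Sum>i\<in>I' \<union> K. d i) mod q = ((\<Sum>i\<in>I'. d i) + (\<Sum>i\<in>K. d i)) mod q"
    by (simp add: sum.union_disjoint[OF finI' finK disj])
  also have "\<dots> = ((\<Sum>i\<in>I'. d i) + (- (\<Sum>i\<in>I'. d i))) mod q"
    using K(2) by (metis mod_add_right_eq)
  finally have "(\<Sum>i\<in>I' \<union> K. d i) mod q = 0" by simp
  hence "[(\<Sum>i\<in>I' \<union> K. f i) = (\<Sum>i\<in>I' \<union> K. g i)] (mod q)"
    unfolding d_def sum_subtractf by (simp add: cong_iff_dvd_diff dvd_eq_mod_eq_0)
  thus ?thesis using K(1) unfolding q_def by blast
qed

end
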